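(* Let $\mathcal{P}$ be a process LTS and $\mathcal{E}$ an environment LTS over the same action set $A$. (i) $\sim_e\ \subseteq\ \sim^{ji}_e$ for every environment $e$. (ii) If $A$ contains two distinct actions $a,b$ and there are states $x,y$ occurring both as processes and as environments with (up to isomorphism of reachable parts) $y$ having exactly the transitions $y\xrightarrow{a}y_1\xrightarrow{b}y_2$, and $x$ having exactly the transitions $x\xrightarrow{a}x_1\xrightarrow{b}x_2$ and $x\xrightarrow{a}x_3$, where $x_2,x_3,y_2$ have no transitions (i.e. $y=a.b$ and $x=a.b+a$), then there is an environment $e$ with $\sim_e\ \subsetneq\ \sim^{ji}_e$ (namely $e=x$, with $y\sim^{ji}_e x$ but not $y\sim_e x$). (iii) $\sim^{ji}_e\ \subseteq\ \simeq^{ji}_e$ for every environment $e$. (iv) Under the same proviso as in (ii), there is an environment $g$ with $\sim^{ji}_g\ \subsetneq\ \simeq^{ji}_g$ (namely $g=y$, with $y\simeq^{ji}_g x$ but not $y\sim^{ji}_g x$).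
   Context: A labeled transition system (LTS) is a triple $\langle \mathrm{St},A,\to\rangle$ with states, actions, and transitions $s\xrightarrow{a}t$. A process LTS $\mathcal{P}=\langle \mathrm{Pr},A,\to\rangle$ has states called processes; an environment LTS $\mathcal{E}=\langle\mathrm{Env},A,\Rightarrow\rangle$ has states called environments, transitions $e\xRightarrow{a}e'$. A simulation is a nonempty relation $S$ on states such that $s\,S\,t$ and $s\xrightarrow{a}s'$ imply some $t\xrightarrow{a}t'$ with $s'\,S\,t'$; a bisimulation is a relation $B$ such that $B$ and its converse are simulations; $\le$ and $\sim$ denote simulatability and bisimilarity (existence of a simulation, resp. bisimulation, relating the states). An $\mathcal{E}$-parameterized bisimulation is a family $(B_f)_{f\in\mathrm{Env}}$ of nonempty relations on $\mathrm{Pr}$ such that whenever $p\,B_e\,q$ and $e\xRightarrow{a}e'$: every $p\xrightarrow{a}p'$ is matched by some $q\xrightarrow{a}q'$ with $p'\,B_{e'}\,q'$, and every $q\xrightarrow{a}q'$ by some $p\xrightarrow{a}p'$ with $p'\,B_{e'}\,q'$. $p\sim_e q$ iff some such family has $p\,B_e\,q$. The join LTS $\mathcal{P}\mathbin{\&}\mathcal{E}$ has states $p\mathbin{\&}e$ and transitions $p\mathbin{\&}e\xrightarrow{a}p'\mathbin{\&}e'$ iff $p\xrightarrow{a}p'$ and $e\xRightarrow{a}e'$. $p\le^{ji}_e q$ iff $p\mathbin{\&}e\le q\mathbin{\&}e$; $p\sim^{ji}_e q$ iff $p\mathbin{\&}e\sim q\mathbin{\&}e$; $p\simeq^{ji}_e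 q$ iff $p\le^{ji}_e q$ and $q\le^{ji}_e p$. *)

theory Defs
  imports Main
begin

text \<open>An LTS is represented by its transition predicate T s a t (s --a--> t).\<close>

definition simulation :: "('s \<Rightarrow> 'a \<Rightarrow> 's \<Rightarrow> bool) \<Rightarrow> ('s \<Rightarrow> 's \<Rightarrow> bool) \<Rightarrow> bool" where
  "simulation T S \<longleftrightarrow> (\<exists>s t. S s t) \<and>
     (\<forall>s t a s'. S s t \<and> T s a s' \<longrightarrow> (\<exists>t'. T t a t' \<and> S s' t'))"

definition bisimulation :: "('s \<Rightarrow> 'a \<Rightarrow> 's \<Rightarrow> bool) \<Rightarrow> ('s \<Rightarrow> 's \<Rightarrow> bool) \<Rightarrow> bool" where
  "bisimulation T B \<longleftrightarrow> simulation T B \<and> simulation T (conversep B)"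

definition simulatable :: "('s \<Rightarrow> 'a \<Rightarrow> 's \<Rightarrow> bool) \<Rightarrow> 's \<Rightarrow> 's \<Rightarrow> bool" where
  "simulatable T s t \<longleftrightarrow> (\<exists>S. simulation T S \<and> S s t)"

definition bisimilar :: "('s \<Rightarrow> 'a \<Rightarrow> 's \<Rightarrow> bool) \<Rightarrow> 's \<Rightarrow> 's \<Rightarrow> bool" where
  "bisimilar T s t \<longleftrightarrow> (\<exists>B. bisimulation T B \<and> B s t)"

definition param_bisimulation ::
  "('p \<Rightarrow> 'a \<Rightarrow> 'p \<Rightarrow> bool) \<Rightarrow> ('e \<Rightarrow> 'a \<Rightarrow> 'e \<Rightarrow> bool) \<Rightarrow> ('e \<Rightarrow> 'p \<Rightarrow> 'p \<Rightarrow> bool) \<Rightarrow> bool" where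
  "param_bisimulation TP TE B \<longleftrightarrow> (\<forall>f. \<exists>p q. B f p q) \<and>
     (\<forall>e p q a e'. B e p q \<and> TE e a e' \<longrightarrow>
        (\<forall>p'. TP p a p' \<longrightarrow> (\<exists>q'. TP q a q' \<and> B e' p' q')) \<and>
        (\<forall>q'. TP q a q' \<longrightarrow> (\<exists>p'. TP p a p' \<and> B e' p' q')))"

definition param_bisimilar ::
  "('p \<Rightarrow> 'a \<Rightarrow> 'p \<Rightarrow> bool) \<Rightarrow> ('e \<Rightarrow> 'a \<Rightarrow> 'e \<Rightarrow> bool) \<Rightarrow> 'e \<Rightarrow> 'p \<Rightarrow> 'p \<Rightarrow> bool" where
  "param_bisimilar TP TE e p q \<longleftrightarrow> (\<exists>B. param_bisimulation TP TE B \<and> B e p q)"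

definition join :: "('p \<Rightarrow> 'a \<Rightarrow> 'p \<Rightarrow> bool) \<Rightarrow> ('e \<Rightarrow> 'a \<Rightarrow> 'e \<Rightarrow> bool) \<Rightarrow> ('p \<times> 'e) \<Rightarrow> 'a \<Rightarrow> ('p \<times> 'e) \<Rightarrow> bool" where
  "join TP TE s a s' \<longleftrightarrow> TP (fst s) a (fst s') \<and> TE (snd s) a (snd s')"

definition ji_sim :: "('p \<Rightarrow> 'a \<Rightarrow> 'p \<Rightarrow> bool) \<Rightarrow> ('e \<Rightarrow> 'a \<Rightarrow> 'e \<Rightarrow> bool) \<Rightarrow> 'e \<Rightarrow> 'p \<Rightarrow> 'p \<Rightarrow> bool" where
  "ji_sim TP TE e p q \<longleftrightarrow> simulatable (join TP TE) (p, e) (q, e)"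

definition ji_bisim :: "('p \<Rightarrow> 'a \<Rightarrow> 'p \<Rightarrow> bool) \<Rightarrow> ('e \<Rightarrow> 'a \<Rightarrow> 'e \<Rightarrow> bool) \<Rightarrow> 'e \<Rightarrow> 'p \<Rightarrow> 'p \<Rightarrow> bool" where
  "ji_bisim TP TE e p q \<longleftrightarrow> bisimilar (join TP TE) (p, e) (q, e)"

definition ji_simeq :: "('p \<Rightarrow> 'a \<Rightarrow> 'p \<Rightarrow> bool) \<Rightarrow> ('e \<Rightarrow> 'a \<Rightarrow> 'e \<Rightarrow> bool) \<Rightarrow> 'e \<Rightarrow> 'p \<Rightarrow> 'p \<Rightarrow> bool" where
  "ji_simeq TP TE e p q \<longleftrightarrow> ji_sim TP TE e p q \<and> ji_sim TP TE e q p"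

definition is_ab :: "('s \<Rightarrow> 'a \<Rightarrow> 's \<Rightarrow> bool) \<Rightarrow> 'a \<Rightarrow> 'a \<Rightarrow> 's \<Rightarrow> bool" where
  "is_ab T a b s \<longleftrightarrow> (\<exists>s1 s2.
     (\<forall>c t. T s c t \<longleftrightarrow> c = a \<and> t = s1) \<and>
     (\<forall>c t. T s1 c t \<longleftrightarrow> c = b \<and> t = s2) \<and>
     (\<forall>c t. \<not> T s2 c t))"

definition is_ab_plus_a :: "('s \<Rightarrow> 'a \<Rightarrow> 's \<Rightarrow> bool) \<Rightarrow> 'a \<Rightarrow> 'a \<Rightarrow> 's \<Rightarrow> bool" where
  "is_ab_plus_a T a b s \<longleftrightarrow> (\<exists>s1 s2 s3.
     (\<forall>c t. T s c t \<longleftrightarrow> c = a \<and> (t = s1 \<or> t = s3)) \<and>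
     (\<forall>c t. T s1 c t \<longleftrightarrow> c = b \<and> t = s2) \<and>
     (\<forall>c t. \<not> T s2 c t) \<and>
     (\<forall>c t. \<not> T s3 c t))"

end

theory Submission
  imports Defs
begin

lemma part1:
  assumes "param_bisimilar TP TE e p q"
  shows "ji_bisim TP TE e p q"
proof -
  obtain B where B: "param_bisimulation TP TE B" "B e p q"
    using assms unfolding param_bisimilar_def by blast
  define R where "R = (\<lambda>s t. snd s = snd t \<and> B (snd s) (fst s) (fst t))"
  have "bisimulation (join TP TE) R"
    unfolding bisimulation_def simulation_def
  proof (intro conjI allI impI)
    show "\<exists>s t. R s t" using B(2) unfolding R_def by (intro exI[of _ "(p,e)"] exI[of _ "(q,e)"]) simp
    show "\<exists>s t. conversep R s t" using B(2) unfolding R_def by (intro exI[of _ "(q,e)"] exI[of _ "(p,e)"]) simp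
  next
    fix s t a s'
    assume h: "R s t \<and> join TP TE s a s'"
    then have "TP (fst s) a (fst s')" "TE (snd s) a (snd s')" "B (snd s) (fst s) (fst t)" "snd s = snd t"
      unfolding R_def join_def by auto
    then obtain q' where "TP (fst t) a q'" "B (snd s') (fst s') q'"
      using B(1) unfolding param_bisimulation_def by blast
    then show "\<exists>t'. join TP TE t a t' \<and> R s' t'"
      using \<open>snd s = snd t\<close> \<open>TE (snd s) a (snd s')\<close>
      by (intro exI[of _ "(q', snd s')"]) (simp add: join_def R_def)
  next
    fix s t a s'
    assume h: "conversep R s t \<and> join TP TE s a s'"
    then have "TP (fst s) a (fst s')" "TE (snd s) a (snd s')" "B (snd s) (fst t) (fst s)" "snd s = snd t"
      unfolding R_def join_def by auto
    then obtain p' where "TP (fst t) a p'" "B (snd s') p' (fst s')"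
      using B(1) unfolding param_bisimulation_def by blast
    then show "\<exists>t'. join TP TE t a t' \<and> conversep R s' t'"
      using \<open>snd s = snd t\<close> \<open>TE (snd s) a (snd s')\<close>
      by (intro exI[of _ "(p', snd s')"]) (simp add: join_def R_def)
  qed
  then show ?thesis unfolding ji_bisim_def bisimilar_def R_def using B(2) by (intro exI) auto
qed

lemma part3:
  assumes "ji_bisim TP TE e p q"
  shows "ji_simeq TP TE e p q"
  using assms unfolding ji_simeq_def ji_sim_def ji_bisim_def bisimilar_def bisimulation_def simulatable_def
  by blast

lemma part2:
  assumes ab: "a \<noteq> b" and x: "is_ab_plus_a TP a b xp" and y: "is_ab TP a b yp"
    and xe: "is_ab_plus_a TE a b xe"
  shows "ji_bisim TP TE xe yp xp \<and> \<not> param_bisimilar TP TE xe yp xp"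
proof -
  obtain x1 x2 x3 where X: "\<forall>c t. TP xp c t \<longleftrightarrow> c = a \<and> (t = x1 \<or> t = x3)"
     "\<forall>c t. TP x1 c t \<longleftrightarrow> c = b \<and> t = x2" "\<forall>c t. \<not> TP x2 c t" "\<forall>c t. \<not> TP x3 c t"
    using x unfolding is_ab_plus_a_def by blast
  obtain y1 y2 where Y: "\<forall>c t. TP yp c t \<longleftrightarrow> c = a \<and> t = y1"
     "\<forall>c t. TP y1 c t \<longleftrightarrow> c = b \<and> t = y2" "\<forall>c t. \<not> TP y2 c t"
    using y unfolding is_ab_def by blast
  obtain e1 e2 e3 where E: "\<forall>c t. TE xe c t \<longleftrightarrow> c = a \<and> (t = e1 \<or> t = e3)"
     "\<forall>c t. TE e1 c t \<longleftrightarrow> c = b \<and> t = e2" "\<forall>c t. \<not> TE e2 c t" "\<forall>c t. \<not> TE e3 c t"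
    using xe unfolding is_ab_plus_a_def by blast
  define stuck where "stuck = (\<lambda>s. \<forall>c t. \<not> join TP TE s c t)"
  define R where "R = (\<lambda>s t. (s = (yp,xe) \<and> t = (xp,xe)) \<or> (s = (y1,e1) \<and> t = (x1,e1)) \<or> (stuck s \<and> stuck t))"
  have "bisimulation (join TP TE) R"
    unfolding bisimulation_def simulation_def
  proof (intro conjI allI impI)
    show "\<exists>s t. R s t" unfolding R_def by blast
    show "\<exists>s t. conversep R s t" unfolding R_def by blast
  next
    fix s t c s'
    assume h: "R s t \<and> join TP TE s c s'"
    show "\<exists>t'. join TP TE t c t' \<and> R s' t'"
    proof -
      have "s = (yp,xe) \<and> t = (xp,xe) \<or> s = (y1,e1) \<and> t = (x1,e1)"
        using h unfolding R_def stuck_def by blast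
      then show ?thesis
      proof
        assume st: "s = (yp,xe) \<and> t = (xp,xe)"
        then have "c = a" "s' = (y1,e1) \<or> s' = (y1,e3)" using h Y E unfolding join_def
          by (auto simp: prod_eq_iff)
        then show ?thesis
        proof (elim disjE)
          assume "s' = (y1,e1)" then show ?thesis using st \<open>c = a\<close> X E
            by (intro exI[of _ "(x1,e1)"]) (simp add: join_def R_def)
        next
          assume "s' = (y1,e3)" then show ?thesis using st \<open>c = a\<close> X E
            by (intro exI[of _ "(x3,e3)"]) (simp add: join_def R_def stuck_def)
        qed
      next
        assume st: "s = (y1,e1) \<and> t = (x1,e1)"
        then have "c = b" "s' = (y2,e2)" using h Y E unfolding join_def
          by (auto simp: prod_eq_iff)
        then show ?thesis using st X E Y
          by (intro exI[of _ "(x2,e2)"]) (simp add: join_def R_def stuck_def)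
      qed
    qed
  next
    fix s t c s'
    assume h: "conversep R s t \<and> join TP TE s c s'"
    show "\<exists>t'. join TP TE t c t' \<and> conversep R s' t'"
    proof -
      have "s = (xp,xe) \<and> t = (yp,xe) \<or> s = (x1,e1) \<and> t = (y1,e1)"
        using h unfolding R_def stuck_def by blast
      then show ?thesis
      proof
        assume st: "s = (xp,xe) \<and> t = (yp,xe)"
        then have "c = a" "s' = (x1,e1) \<or> stuck s'" using h X E unfolding join_def stuck_def
          by (auto simp: prod_eq_iff)
        then show ?thesis
        proof (elim disjE)
          assume "s' = (x1,e1)" then show ?thesis using st \<open>c = a\<close> Y E
            by (intro exI[of _ "(y1,e1)"]) (simp add: join_def R_def)
        next
          assume "stuck s'" then show ?thesis using st \<open>c = a\<close> Y E
            by (intro exI[of _ "(y1,e3)"]) (simp add: join_def R_def stuck_def)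
        qed
      next
        assume st: "s = (x1,e1) \<and> t = (y1,e1)"
        then have "c = b" "s' = (x2,e2)" using h X E unfolding join_def
          by (auto simp: prod_eq_iff)
        then show ?thesis using st X E Y
          by (intro exI[of _ "(y2,e2)"]) (simp add: join_def R_def stuck_def)
      qed
    qed
  qed
  then have "ji_bisim TP TE xe yp xp" unfolding ji_bisim_def bisimilar_def R_def by blast
  moreover have "\<not> param_bisimilar TP TE xe yp xp"
  proof
    assume "param_bisimilar TP TE xe yp xp"
    then obtain B where B: "param_bisimulation TP TE B" "B xe yp xp"
      unfolding param_bisimilar_def by blast
    have "TE xe a e1" "TP xp a x3" using E X by auto
    then obtain p' where "TP yp a p'" "B e1 p' x3"
      using B unfolding param_bisimulation_def by blast
    then have "B e1 y1 x3" using Y by auto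
    moreover have "TE e1 b e2" "TP y1 b y2" using E Y by auto
    ultimately obtain q' where "TP x3 b q'"
      using B(1) unfolding param_bisimulation_def by blast
    then show False using X by auto
  qed
  ultimately show ?thesis by blast
qed

lemma part4:
  assumes ab: "a \<noteq> b" and x: "is_ab_plus_a TP a b xp" and y: "is_ab TP a b yp"
    and ye: "is_ab TE a b ye"
  shows "ji_simeq TP TE ye yp xp \<and> \<not> ji_bisim TP TE ye yp xp"
proof -
  obtain x1 x2 x3 where X: "\<forall>c t. TP xp c t \<longleftrightarrow> c = a \<and> (t = x1 \<or> t = x3)"
     "\<forall>c t. TP x1 c t \<longleftrightarrow> c = b \<and> t = x2" "\<forall>c t. \<not> TP x2 c t" "\<forall>c t. \<not> TP x3 c t"
    using x unfolding is_ab_plus_a_def by blast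
  obtain y1 y2 where Y: "\<forall>c t. TP yp c t \<longleftrightarrow> c = a \<and> t = y1"
     "\<forall>c t. TP y1 c t \<longleftrightarrow> c = b \<and> t = y2" "\<forall>c t. \<not> TP y2 c t"
    using y unfolding is_ab_def by blast
  obtain e1 e2 where E: "\<forall>c t. TE ye c t \<longleftrightarrow> c = a \<and> t = e1"
     "\<forall>c t. TE e1 c t \<longleftrightarrow> c = b \<and> t = e2" "\<forall>c t. \<not> TE e2 c t"
    using ye unfolding is_ab_def by blast
  define stuck where "stuck = (\<lambda>s. \<forall>c t. \<not> join TP TE s c t)"
  define S1 where "S1 = (\<lambda>s t. (s = (yp,ye) \<and> t = (xp,ye)) \<or> (s = (y1,e1) \<and> t = (x1,e1)) \<or> stuck s)"
  define S2 where "S2 = (\<lambda>s t. (s = (xp,ye) \<and> t = (yp,ye)) \<or> (s = (x1,e1) \<and> t = (y1,e1)) \<or> stuck s)"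
  have "simulation (join TP TE) S1"
    unfolding simulation_def
  proof (intro conjI allI impI)
    show "\<exists>s t. S1 s t" unfolding S1_def by blast
  next
    fix s t c s'
    assume h: "S1 s t \<and> join TP TE s c s'"
    have "s = (yp,ye) \<and> t = (xp,ye) \<or> s = (y1,e1) \<and> t = (x1,e1)"
      using h unfolding S1_def stuck_def by blast
    then show "\<exists>t'. join TP TE t c t' \<and> S1 s' t'"
    proof
      assume st: "s = (yp,ye) \<and> t = (xp,ye)"
      then have "c = a" "s' = (y1,e1)" using h Y E unfolding join_def
        by (auto simp: prod_eq_iff)
      then show ?thesis using st X E
        by (intro exI[of _ "(x1,e1)"]) (simp add: join_def S1_def)
    next
      assume st: "s = (y1,e1) \<and> t = (x1,e1)"
      then have "c = b" "s' = (y2,e2)" using h Y E unfolding join_def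
        by (auto simp: prod_eq_iff)
      then show ?thesis using st X E Y
        by (intro exI[of _ "(x2,e2)"]) (simp add: join_def S1_def stuck_def)
    qed
  qed
  moreover have "simulation (join TP TE) S2"
    unfolding simulation_def
  proof (intro conjI allI impI)
    show "\<exists>s t. S2 s t" unfolding S2_def by blast
  next
    fix s t c s'
    assume h: "S2 s t \<and> join TP TE s c s'"
    have "s = (xp,ye) \<and> t = (yp,ye) \<or> s = (x1,e1) \<and> t = (y1,e1)"
      using h unfolding S2_def stuck_def by blast
    then show "\<exists>t'. join TP TE t c t' \<and> S2 s' t'"
    proof
      assume st: "s = (xp,ye) \<and> t = (yp,ye)"
      then have "c = a" "s' = (x1,e1) \<or> stuck s'" using h X E unfolding join_def stuck_def
        by (auto simp: prod_eq_iff)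
      then show ?thesis using st Y E
        by (intro exI[of _ "(y1,e1)"]) (auto simp add: join_def S2_def)
    next
      assume st: "s = (x1,e1) \<and> t = (y1,e1)"
      then have "c = b" "s' = (x2,e2)" using h X E unfolding join_def
        by (auto simp: prod_eq_iff)
      then show ?thesis using st X E Y
        by (intro exI[of _ "(y2,e2)"]) (simp add: join_def S2_def stuck_def)
    qed
  qed
  ultimately have "ji_simeq TP TE ye yp xp"
    unfolding ji_simeq_def ji_sim_def simulatable_def S1_def S2_def by blast
  moreover have "\<not> ji_bisim TP TE ye yp xp"
  proof
    assume "ji_bisim TP TE ye yp xp"
    then obtain B where B: "bisimulation (join TP TE) B" "B (yp,ye) (xp,ye)"
      unfolding ji_bisim_def bisimilar_def by blast
    have "join TP TE (xp,ye) a (x3,e1)" using X E by (simp add: join_def)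
    then obtain t' where t': "join TP TE (yp,ye) a t'" "B t' (x3,e1)"
    proof -
      have "simulation (join TP TE) (conversep B)" using B(1) unfolding bisimulation_def by blast
      then have "\<forall>s t a s'. conversep B s t \<and> join TP TE s a s' \<longrightarrow> (\<exists>t'. join TP TE t a t' \<and> conversep B s' t')"
        unfolding simulation_def by blast
      then show ?thesis using B(2) \<open>join TP TE (xp,ye) a (x3,e1)\<close> that by blast
    qed
    then have t1: "t' = (y1,e1)" using Y E by (auto simp: join_def prod_eq_iff)
    have j2: "join TP TE (y1,e1) b (y2,e2)" using Y E by (simp add: join_def)
    obtain u where "join TP TE (x3,e1) b u"
    proof -
      have "\<forall>s t a s'. B s t \<and> join TP TE s a s' \<longrightarrow> (\<exists>t'. join TP TE t a t' \<and> B s' t')"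
        using B(1) unfolding bisimulation_def simulation_def by blast
      then show ?thesis using t' t1 j2 that by blast
    qed
    then show False using X by (simp add: join_def)
  qed
  ultimately show ?thesis by blast
qed

theorem proposition3p7:
  fixes TP :: "'p \<Rightarrow> 'a \<Rightarrow> 'p \<Rightarrow> bool"
    and TE :: "'e \<Rightarrow> 'a \<Rightarrow> 'e \<Rightarrow> bool"
  shows
    "(\<forall>e p q. param_bisimilar TP TE e p q \<longrightarrow> ji_bisim TP TE e p q)
     \<and> (\<forall>a b xp yp xe ye.
          a \<noteq> b \<and> is_ab_plus_a TP a b xp \<and> is_ab TP a b yp
          \<and> is_ab_plus_a TE a b xe \<and> is_ab TE a b ye \<longrightarrow>
          ji_bisim TP TE xe yp xp \<and> \<not> param_bisimilar TP TE xe yp xp)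
     \<and> (\<forall>e p q. ji_bisim TP TE e p q \<longrightarrow> ji_simeq TP TE e p q)
     \<and> (\<forall>a b xp yp xe ye.
          a \<noteq> b \<and> is_ab_plus_a TP a b xp \<and> is_ab TP a b yp
          \<and> is_ab_plus_a TE a b xe \<and> is_ab TE a b ye \<longrightarrow>
          ji_simeq TP TE ye yp xp \<and> \<not> ji_bisim TP TE ye yp xp)"
proof (intro conjI allI impI)
  fix e p q assume "param_bisimilar TP TE e p q" then show "ji_bisim TP TE e p q" by (rule part1)
next
  fix e p q assume "ji_bisim TP TE e p q" then show "ji_simeq TP TE e p q" by (rule part3)
next
  fix a b xp yp xe ye
  assume h: "a \<noteq> b \<and> is_ab_plus_a TP a b xp \<and> is_ab TP a b yp \<and> is_ab_plus_a TE a b xe \<and> is_ab TE a b ye"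
  then show "ji_bisim TP TE xe yp xp" using part2[of a b TP xp yp TE xe] by simp
  show "\<not> param_bisimilar TP TE xe yp xp" using h part2[of a b TP xp yp TE xe] by simp
  show "ji_simeq TP TE ye yp xp" using h part4[of a b TP xp yp TE ye] by simp
  show "\<not> ji_bisim TP TE ye yp xp" using h part4[of a b TP xp yp TE ye] by simp
qed

end
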